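(* There is a universal constant $C$ such that for any real array $A=(a_{ijk})_{i,j\le n,k\le m}$, any nonempty $T\subset\mathbb{R}^m$ and any $p\ge1$ there exists a decomposition $B^n_2+\sqrt pB^n_1=\bigcup_{i=1}^NU_i$ with $N\le\exp(Cp)$ such that for every $i\le N$, \[ \sup_{x,x'\in U_i}\beta_{A,T}(x-x')\le\frac1{\sqrt p}\,\mathbb{E}\sup_{t\in T}\Big|\sum_{ijk}a_{ijk}g_i\mathcal E_jt_k\Big|\le\frac1{\sqrt p}s_A(T). \]
   Context: $B^n_2,B^n_1$ are the Euclidean and $\ell_1$ unit balls of $\mathbb{R}^n$. $(g_i)$, $(g_{ij})$ are independent standard Gaussian variables; $E_n=(\mathcal E_1,\dots,\mathcal E_n)$ has i.i.d. standard symmetric exponential coordinates, independent of the Gaussians. $\beta_{A,T}(x)=\mathbb{E}\sup_{t\in T}|\sum_{ijk}a_{ijk}g_ix_jt_k|$, and $s_A(T)=\mathbb{E}\sup_{t\in T}\big|\sum_{ijk}a_{ijk}g_{ij}t_k\big|+\mathbb{E}\beta_{A,T}(E_n)$. *)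

theory Defs
  imports "HOL-Probability.Probability"
begin

text \<open>Vectors of R^n are represented as functions nat => real vanishing from index n on.\<close>
definition vecs :: "nat \<Rightarrow> (nat \<Rightarrow> real) set" where
  "vecs n = {x. \<forall>j\<ge>n. x j = 0}"

definition B2 :: "nat \<Rightarrow> (nat \<Rightarrow> real) set" where
  "B2 n = {x \<in> vecs n. (\<Sum>j<n. (x j)\<^sup>2) \<le> 1}"

definition B1 :: "nat \<Rightarrow> (nat \<Rightarrow> real) set" where
  "B1 n = {x \<in> vecs n. (\<Sum>j<n. \<bar>x j\<bar>) \<le> 1}"

definition KB :: "nat \<Rightarrow> real \<Rightarrow> (nat \<Rightarrow> real) set" where
  "KB n p = {(\<lambda>j. y j + sqrt p * z j) | y z. y \<in> B2 n \<and> z \<in> B1 n}"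

definition gauss :: "nat \<Rightarrow> (nat \<Rightarrow> real) measure" where
  "gauss n = PiM {..<n} (\<lambda>_. std_normal_distribution)"

definition gauss2 :: "nat \<Rightarrow> (nat \<times> nat \<Rightarrow> real) measure" where
  "gauss2 n = PiM ({..<n} \<times> {..<n}) (\<lambda>_. std_normal_distribution)"

definition sym_exp_distribution :: "real measure" where
  "sym_exp_distribution = density lborel (\<lambda>x. ennreal (exp (- \<bar>x\<bar>) / 2))"

definition symexp :: "nat \<Rightarrow> (nat \<Rightarrow> real) measure" where
  "symexp n = PiM {..<n} (\<lambda>_. sym_exp_distribution)"

definition beta :: "nat \<Rightarrow> nat \<Rightarrow> (nat \<Rightarrow> nat \<Rightarrow> nat \<Rightarrow> real) \<Rightarrow> (nat \<Rightarrow> real) set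
    \<Rightarrow> (nat \<Rightarrow> real) \<Rightarrow> ennreal" where
  "beta n m a T x = (\<integral>\<^sup>+ g. (SUP t\<in>T. ennreal \<bar>\<Sum>i<n. \<Sum>j<n. \<Sum>k<m. a i j k * g i * x j * t k\<bar>) \<partial>gauss n)"

definition gauss_exp_sup :: "nat \<Rightarrow> nat \<Rightarrow> (nat \<Rightarrow> nat \<Rightarrow> nat \<Rightarrow> real) \<Rightarrow> (nat \<Rightarrow> real) set \<Rightarrow> ennreal" where
  "gauss_exp_sup n m a T = (\<integral>\<^sup>+ ge. (SUP t\<in>T. ennreal \<bar>\<Sum>i<n. \<Sum>j<n. \<Sum>k<m. a i j k * fst ge i * snd ge j * t k\<bar>)
      \<partial>(gauss n \<Otimes>\<^sub>M symexp n))"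

definition sA :: "nat \<Rightarrow> nat \<Rightarrow> (nat \<Rightarrow> nat \<Rightarrow> nat \<Rightarrow> real) \<Rightarrow> (nat \<Rightarrow> real) set \<Rightarrow> ennreal" where
  "sA n m a T = (\<integral>\<^sup>+ G. (SUP t\<in>T. ennreal \<bar>\<Sum>i<n. \<Sum>j<n. \<Sum>k<m. a i j k * G (i, j) * t k\<bar>) \<partial>gauss2 n)
     + (\<integral>\<^sup>+ e. beta n m a T e \<partial>symexp n)"

end

theory Submission
  imports Defs
begin

lemma prod_transform:
  fixes \<mu> :: "real measure" and \<phi> :: "nat \<Rightarrow> real \<Rightarrow> real" and w :: "nat \<Rightarrow> real \<Rightarrow> ennreal"
  assumes P: "prob_space \<mu>" and S: "sets \<mu> = sets borel"
    and phim[measurable]: "\<And>j. \<phi> j \<in> borel_measurable borel"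
    and wm[measurable]: "\<And>j. w j \<in> borel_measurable borel"
    and one: "\<And>j f. f \<in> borel_measurable borel \<Longrightarrow> (\<integral>\<^sup>+y. f (\<phi> j y) \<partial>\<mu>) = (\<integral>\<^sup>+y. f y * w j y \<partial>\<mu>)"
    and I: "finite I"
  shows "h \<in> borel_measurable (PiM I (\<lambda>_. \<mu>)) \<Longrightarrow>
     (\<integral>\<^sup>+z. h (\<lambda>j\<in>I. \<phi> j (z j)) \<partial>PiM I (\<lambda>_. \<mu>)) = (\<integral>\<^sup>+z. h z * (\<Prod>j\<in>I. w j (z j)) \<partial>PiM I (\<lambda>_. \<mu>))"
  using I
proof (induction I arbitrary: h rule: finite_induct)
  case empty
  then show ?case by (simp add: PiM_empty nn_integral_count_space_finite)
next
  case (insert i I)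
  interpret product_sigma_finite "\<lambda>_. \<mu>"
    using P unfolding product_sigma_finite_def by (simp add: prob_space_imp_sigma_finite)
  have phm[measurable]: "\<phi> j \<in> measurable \<mu> \<mu>" for j
    using phim by (simp add: measurable_cong_sets[OF S S])
  have wm'[measurable]: "w j \<in> borel_measurable \<mu>" for j
    using wm by (simp add: measurable_cong_sets[OF S refl])
  note hm[measurable] = insert.prems
  let ?R = "\<lambda>z. (\<lambda>j\<in>I. \<phi> j (z j))"
  have Rm[measurable]: "?R \<in> measurable (PiM I (\<lambda>_. \<mu>)) (PiM I (\<lambda>_. \<mu>))"
    by measurable
  have eq1: "(\<lambda>j\<in>insert i I. \<phi> j ((z(i:=y)) j)) = (?R z)(i := \<phi> i y)" for z y
    using insert.hyps by (auto simp: fun_eq_iff)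
  define G where "G = (\<lambda>v. \<integral>\<^sup>+y. h (v(i := y)) * w i y \<partial>\<mu>)"
  have Gm[measurable]: "G \<in> borel_measurable (PiM I (\<lambda>_. \<mu>))"
    unfolding G_def by measurable
  have upd_m: "(\<lambda>y. v(i := y)) \<in> measurable \<mu> (PiM (insert i I) (\<lambda>_. \<mu>))" if "v \<in> space (PiM I (\<lambda>_. \<mu>))" for v
    using measurable_Pair1'[OF that, THEN measurable_compose, OF measurable_add_dim] by simp
  have "(\<integral>\<^sup>+z. h (\<lambda>j\<in>insert i I. \<phi> j (z j)) \<partial>PiM (insert i I) (\<lambda>_. \<mu>))
      = (\<integral>\<^sup>+z. (\<integral>\<^sup>+y. h ((?R z)(i := \<phi> i y)) \<partial>\<mu>) \<partial>PiM I (\<lambda>_. \<mu>))"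
    apply (subst product_nn_integral_insert)
    apply (simp add: insert.hyps)
    apply (simp add: insert.hyps)
     apply measurable
    apply (simp only: eq1)
    done
  also have "\<dots> = (\<integral>\<^sup>+z. G (?R z) \<partial>PiM I (\<lambda>_. \<mu>))"
  proof (rule nn_integral_cong)
    fix z assume z: "z \<in> space (PiM I (\<lambda>_. \<mu>))"
    have Rz: "?R z \<in> space (PiM I (\<lambda>_. \<mu>))"
      using measurable_space[OF Rm z] .
    have fm: "(\<lambda>y. h ((?R z)(i := y))) \<in> borel_measurable borel"
      using measurable_compose[OF upd_m[OF Rz] hm] by (simp add: measurable_cong_sets[OF S refl] fun_upd_def)
    show "(\<integral>\<^sup>+y. h ((?R z)(i := \<phi> i y)) \<partial>\<mu>) = G (?R z)"
      unfolding G_def using one[OF fm, of i] by simp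
  qed
  also have "\<dots> = (\<integral>\<^sup>+z. G z * (\<Prod>j\<in>I. w j (z j)) \<partial>PiM I (\<lambda>_. \<mu>))"
    by (rule insert.IH) (rule Gm)
  also have "\<dots> = (\<integral>\<^sup>+z. (\<integral>\<^sup>+y. h (z(i := y)) * (\<Prod>j\<in>insert i I. w j ((z(i:=y)) j)) \<partial>\<mu>) \<partial>PiM I (\<lambda>_. \<mu>))"
  proof (rule nn_integral_cong)
    fix z assume z: "z \<in> space (PiM I (\<lambda>_. \<mu>))"
    have "(\<Prod>j\<in>insert i I. w j ((z(i:=y)) j)) = w i y * (\<Prod>j\<in>I. w j (z j))" for y
    proof -
      have "(\<Prod>j\<in>I. w j ((z(i:=y)) j)) = (\<Prod>j\<in>I. w j (z j))"
        using insert.hyps by (intro prod.cong) auto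
      then show ?thesis using insert.hyps by (simp add: prod.insert)
    qed
    moreover have "(\<lambda>y. h (z(i := y)) * w i y) \<in> borel_measurable \<mu>"
      using measurable_compose[OF upd_m[OF z] hm] by measurable
    ultimately show "G z * (\<Prod>j\<in>I. w j (z j)) = (\<integral>\<^sup>+y. h (z(i := y)) * (\<Prod>j\<in>insert i I. w j ((z(i:=y)) j)) \<partial>\<mu>)"
      unfolding G_def by (simp add: nn_integral_multc[symmetric] mult.assoc)
  qed
  also have "\<dots> = (\<integral>\<^sup>+z. h z * (\<Prod>j\<in>insert i I. w j (z j)) \<partial>PiM (insert i I) (\<lambda>_. \<mu>))"
    by (subst product_nn_integral_insert) (auto simp: insert.hyps)
  finally show ?case .
qed

definition rho :: "real \<Rightarrow> ennreal" where "rho x = ennreal (exp (- \<bar>x\<bar>) / 2)"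

lemma rho_m[measurable]: "rho \<in> borel_measurable borel"
  unfolding rho_def by measurable

lemma sym_exp_rho: "sym_exp_distribution = density lborel rho"
  unfolding sym_exp_distribution_def rho_def ..

lemma sets_sym_exp[simp, measurable_cong]: "sets sym_exp_distribution = sets borel"
  by (simp add: sym_exp_distribution_def)

lemma space_sym_exp[simp]: "space sym_exp_distribution = UNIV"
  by (simp add: sym_exp_distribution_def)

lemma nn_integral_sym_exp:
  assumes [measurable]: "f \<in> borel_measurable borel"
  shows "(\<integral>\<^sup>+y. f y \<partial>sym_exp_distribution) = (\<integral>\<^sup>+y. rho y * f y \<partial>lborel)"
  unfolding sym_exp_rho by (subst nn_integral_density) auto

lemma sym_exp_shift:
  assumes [measurable]: "f \<in> borel_measurable borel"
  shows "(\<integral>\<^sup>+y. f (y - c) \<partial>sym_exp_distribution)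
       = (\<integral>\<^sup>+y. f y * ennreal (exp (\<bar>y\<bar> - \<bar>y + c\<bar>)) \<partial>sym_exp_distribution)"
proof -
  have "(\<integral>\<^sup>+y. f (y - c) \<partial>sym_exp_distribution) = (\<integral>\<^sup>+y. rho y * f (y - c) \<partial>lborel)"
    by (rule nn_integral_sym_exp) measurable
  also have "\<dots> = ennreal \<bar>1\<bar> * (\<integral>\<^sup>+y. rho (c + 1 * y) * f ((c + 1 * y) - c) \<partial>lborel)"
    by (rule nn_integral_real_affine) auto
  also have "\<dots> = (\<integral>\<^sup>+y. rho y * (f y * ennreal (exp (\<bar>y\<bar> - \<bar>y + c\<bar>))) \<partial>lborel)"
  proof -
    have "rho (c + y) = rho y * ennreal (exp (\<bar>y\<bar> - \<bar>y + c\<bar>))" for y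
    proof -
      have "exp (- \<bar>c + y\<bar>) / 2 = exp (- \<bar>y\<bar>) / 2 * exp (\<bar>y\<bar> - \<bar>y + c\<bar>)"
        by (simp add: mult_exp_exp add.commute)
      then show ?thesis unfolding rho_def by (simp add: ennreal_mult[symmetric])
    qed
    then show ?thesis by (simp add: ac_simps)
  qed
  also have "\<dots> = (\<integral>\<^sup>+y. f y * ennreal (exp (\<bar>y\<bar> - \<bar>y + c\<bar>)) \<partial>sym_exp_distribution)"
    by (rule nn_integral_sym_exp[symmetric]) measurable
  finally show ?thesis .
qed

lemma sym_exp_refl:
  assumes [measurable]: "f \<in> borel_measurable borel"
  shows "(\<integral>\<^sup>+y. f (- y) \<partial>sym_exp_distribution) = (\<integral>\<^sup>+y. f y * 1 \<partial>sym_exp_distribution)"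
proof -
  have "(\<integral>\<^sup>+y. f y * 1 \<partial>sym_exp_distribution) = (\<integral>\<^sup>+y. rho y * f y \<partial>lborel)"
    by (simp add: nn_integral_sym_exp)
  also have "\<dots> = ennreal \<bar>-1\<bar> * (\<integral>\<^sup>+y. rho (0 + -1 * y) * f (0 + -1 * y) \<partial>lborel)"
    by (rule nn_integral_real_affine) auto
  also have "\<dots> = (\<integral>\<^sup>+y. rho y * f (- y) \<partial>lborel)"
    by (simp add: rho_def)
  also have "\<dots> = (\<integral>\<^sup>+y. f (- y) \<partial>sym_exp_distribution)"
    by (rule nn_integral_sym_exp[symmetric]) measurable
  finally show ?thesis by simp
qed

lemma prob_space_sym_exp: "prob_space sym_exp_distribution"
proof
  let ?e = "\<lambda>x. ennreal (exponential_density 1 x)"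
  have em[measurable]: "?e \<in> borel_measurable borel" by measurable
  have one: "(\<integral>\<^sup>+x. ?e x \<partial>lborel) = 1"
    using prob_space.emeasure_space_1[OF prob_space_exponential_density[of 1]]
    by (simp add: emeasure_density)
  have AE: "AE x in lborel. rho x * 1 = (?e x + ?e (- x)) / 2"
    using AE_lborel_singleton[of "0::real"]
  proof eventually_elim
    case (elim x)
    then show ?case
      by (cases "x < 0") (auto simp: rho_def exponential_density_def ennreal_divide_numeral)
  qed
  have "emeasure sym_exp_distribution (space sym_exp_distribution) = (\<integral>\<^sup>+x. rho x * 1 \<partial>lborel)"
    by (simp add: sym_exp_rho emeasure_density)
  also have "\<dots> = (\<integral>\<^sup>+x. (?e x + ?e (- x)) / 2 \<partial>lborel)"
    by (rule nn_integral_cong_AE[OF AE])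
  also have "\<dots> = ((\<integral>\<^sup>+x. ?e x \<partial>lborel) + (\<integral>\<^sup>+x. ?e (- x) \<partial>lborel)) / 2"
    by (simp add: divide_ennreal_def nn_integral_multc nn_integral_add)
  also have "(\<integral>\<^sup>+x. ?e (- x) \<partial>lborel) = ennreal \<bar>-1\<bar> * (\<integral>\<^sup>+x. ?e (- (0 + -1 * x)) \<partial>lborel)"
    by (rule nn_integral_real_affine) auto
  also have "\<dots> = 1" using one by simp
  finally show "emeasure sym_exp_distribution (space sym_exp_distribution) = 1"
    using one by simp
qed

lemma sym_exp_small:
  assumes a: "0 \<le> a"
  shows "(\<integral>\<^sup>+y. indicator {y. \<bar>y\<bar> \<le> a} y \<partial>sym_exp_distribution) \<le> ennreal a"
proof -
  have "(\<integral>\<^sup>+y. indicator {y. \<bar>y\<bar> \<le> a} y \<partial>sym_exp_distribution) = (\<integral>\<^sup>+y. rho y * indicator {-a..a} y \<partial>lborel)"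
    by (subst nn_integral_sym_exp) (auto intro!: nn_integral_cong split: split_indicator)
  also have "\<dots> \<le> (\<integral>\<^sup>+y. ennreal (1/2) * indicator {-a..a} y \<partial>lborel)"
  proof (intro nn_integral_mono)
    fix y
    have "exp (- \<bar>y\<bar>) / 2 \<le> (1/2::real)" by simp
    then have "rho y \<le> ennreal (1/2)" unfolding rho_def using ennreal_leI by blast
    then show "rho y * indicator {-a..a} y \<le> ennreal (1/2) * indicator {-a..a} y"
      by (simp add: mult_right_mono)
  qed
  also have "\<dots> = ennreal (1/2) * ennreal (2 * a)"
    using a by (simp add: nn_integral_cmult)
  also have "\<dots> = ennreal a"
    using a by (subst ennreal_mult[symmetric]) auto
  finally show ?thesis .
qed

lemma prob_space_symexp: "prob_space (symexp n)"
  unfolding symexp_def by (rule prob_space_PiM) (rule prob_space_sym_exp)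

lemma symexp_shift:
  assumes hm: "h \<in> borel_measurable (symexp n)"
  shows "(\<integral>\<^sup>+z. h (\<lambda>j\<in>{..<n}. z j - x j) \<partial>symexp n)
       = (\<integral>\<^sup>+z. h z * ennreal (exp (\<Sum>j<n. \<bar>z j\<bar> - \<bar>z j + x j\<bar>)) \<partial>symexp n)"
proof -
  have "(\<integral>\<^sup>+z. h (\<lambda>j\<in>{..<n}. z j - x j) \<partial>symexp n)
       = (\<integral>\<^sup>+z. h z * (\<Prod>j\<in>{..<n}. ennreal (exp (\<bar>z j\<bar> - \<bar>z j + x j\<bar>))) \<partial>symexp n)"
    unfolding symexp_def
    by (rule prod_transform[where \<phi>="\<lambda>j s. s - x j" and w="\<lambda>j s. ennreal (exp (\<bar>s\<bar> - \<bar>s + x j\<bar>))"])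
       (auto simp: prob_space_sym_exp sym_exp_shift hm[unfolded symexp_def])
  also have "\<dots> = (\<integral>\<^sup>+z. h z * ennreal (exp (\<Sum>j<n. \<bar>z j\<bar> - \<bar>z j + x j\<bar>)) \<partial>symexp n)"
    by (simp add: prod_ennreal exp_sum)
  finally show ?thesis .
qed

lemma symexp_refl:
  assumes hm: "h \<in> borel_measurable (symexp n)"
  shows "(\<integral>\<^sup>+z. h (\<lambda>j\<in>{..<n}. - z j) \<partial>symexp n) = (\<integral>\<^sup>+z. h z \<partial>symexp n)"
proof -
  have "(\<integral>\<^sup>+z. h (\<lambda>j\<in>{..<n}. - z j) \<partial>symexp n)
       = (\<integral>\<^sup>+z. h z * (\<Prod>j\<in>{..<n}. 1) \<partial>symexp n)"
    unfolding symexp_def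
    by (rule prod_transform[where \<phi>="\<lambda>j s. - s" and w="\<lambda>j s. 1"])
       (auto simp: prob_space_sym_exp sym_exp_refl hm[unfolded symexp_def])
  then show ?thesis by simp
qed

lemma symexp_component:
  assumes "j < n" and [measurable]: "f \<in> borel_measurable borel"
  shows "(\<integral>\<^sup>+z. f (z j) \<partial>symexp n) = (\<integral>\<^sup>+y. f y \<partial>sym_exp_distribution)"
proof -
  have "distr (symexp n) sym_exp_distribution (\<lambda>z. z j) = sym_exp_distribution"
    unfolding symexp_def using assms prob_space_sym_exp by (intro distr_PiM_component) auto
  then have "(\<integral>\<^sup>+y. f y \<partial>sym_exp_distribution) = (\<integral>\<^sup>+y. f y \<partial>distr (symexp n) sym_exp_distribution (\<lambda>z. z j))"
    by simp
  also have "\<dots> = (\<integral>\<^sup>+z. f (z j) \<partial>symexp n)"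
    using assms unfolding symexp_def by (subst nn_integral_distr) auto
  finally show ?thesis by simp
qed

lemma symexp_q:
  "(\<integral>\<^sup>+z. (\<Sum>j<n. ennreal \<bar>u j\<bar> * indicator {y. \<bar>y\<bar> \<le> \<bar>u j\<bar>} (z j)) \<partial>symexp n) \<le> ennreal (\<Sum>j<n. (u j)\<^sup>2)"
proof -
  have "(\<integral>\<^sup>+z. (\<Sum>j<n. ennreal \<bar>u j\<bar> * indicator {y. \<bar>y\<bar> \<le> \<bar>u j\<bar>} (z j)) \<partial>symexp n)
     = (\<Sum>j<n. ennreal \<bar>u j\<bar> * (\<integral>\<^sup>+z. indicator {y. \<bar>y\<bar> \<le> \<bar>u j\<bar>} (z j) \<partial>symexp n))"
    unfolding symexp_def by (subst nn_integral_sum) (auto simp: nn_integral_cmult)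
  also have "\<dots> = (\<Sum>j<n. ennreal \<bar>u j\<bar> * (\<integral>\<^sup>+y. indicator {y. \<bar>y\<bar> \<le> \<bar>u j\<bar>} y \<partial>sym_exp_distribution))"
    by (intro sum.cong refl arg_cong2[where f="(*)"] symexp_component) auto
  also have "\<dots> \<le> (\<Sum>j<n. ennreal \<bar>u j\<bar> * ennreal \<bar>u j\<bar>)"
    by (intro sum_mono mult_left_mono sym_exp_small) auto
  also have "\<dots> = ennreal (\<Sum>j<n. (u j)\<^sup>2)"
    by (simp add: ennreal_mult[symmetric] power2_eq_square sum_nonneg flip: sum_ennreal)
  finally show ?thesis .
qed

lemma amgm_exp: "2 * exp ((a + b) / 2) \<le> exp a + exp (b::real)"
proof -
  have "0 \<le> (exp (a/2) - exp (b/2))\<^sup>2" by simp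
  also have "\<dots> = exp a + exp b - 2 * exp ((a + b) / 2)"
    by (simp add: power2_eq_square algebra_simps mult_exp_exp flip: exp_add)
  finally show ?thesis by simp
qed

lemma pt_ineq:
  fixes z y u v :: real assumes "y = u + v"
  shows "- (\<bar>v\<bar> + (if \<bar>z\<bar> \<le> \<bar>u\<bar> then \<bar>u\<bar> else 0)) \<le> ((\<bar>z\<bar> - \<bar>z + y\<bar>) + (\<bar>z\<bar> - \<bar>z + - y\<bar>)) / 2"
proof (cases "\<bar>z\<bar> \<le> \<bar>u\<bar>")
  case True
  have "\<bar>z + y\<bar> \<le> \<bar>z\<bar> + \<bar>u\<bar> + \<bar>v\<bar>" "\<bar>z + - y\<bar> \<le> \<bar>z\<bar> + \<bar>u\<bar> + \<bar>v\<bar>"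
    using assms by (simp_all add: abs_triangle_ineq4 abs_le_iff) (linarith+)
  then show ?thesis using True by simp
next
  case False
  have "\<bar>z + y\<bar> + \<bar>z + - y\<bar> \<le> 2 * \<bar>z\<bar> + 2 * \<bar>v\<bar>"
    using assms False by (simp add: abs_if split: if_splits)
  then show ?thesis using False by simp
qed

lemma restrict_shift_m[measurable]:
  "(\<lambda>z. \<lambda>j\<in>{..<n}. z j - y j) \<in> measurable (symexp n) (symexp n)"
  unfolding symexp_def by measurable

lemma restrict_neg_m[measurable]:
  "(\<lambda>z. \<lambda>j\<in>{..<n}. - z j) \<in> measurable (symexp n) (symexp n)"
  unfolding symexp_def by measurable

lemma shift_lower:
  fixes K :: "(nat \<Rightarrow> real) set" and y u v :: "nat \<Rightarrow> real" and c :: real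
  assumes Km[measurable]: "K \<in> sets (symexp n)"
    and Ksym: "\<And>z. z \<in> K \<Longrightarrow> (\<lambda>j\<in>{..<n}. - z j) \<in> K"
    and yuv: "\<And>j. j < n \<Longrightarrow> y j = u j + v j"
  shows "ennreal (exp (- ((\<Sum>j<n. \<bar>v j\<bar>) + c))) *
           emeasure (symexp n) (K \<inter> {z \<in> space (symexp n). (\<Sum>j<n. if \<bar>z j\<bar> \<le> \<bar>u j\<bar> then \<bar>u j\<bar> else 0) \<le> c})
         \<le> emeasure (symexp n) {z \<in> space (symexp n). (\<lambda>j\<in>{..<n}. z j - y j) \<in> K}"
proof -
  let ?\<nu> = "symexp n"
  let ?q = "\<lambda>z. (\<Sum>j<n. if \<bar>z j\<bar> \<le> \<bar>u j\<bar> then \<bar>u j\<bar> else 0::real)"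
  let ?V = "\<Sum>j<n. \<bar>v j\<bar>"
  let ?L = "{z \<in> space ?\<nu>. ?q z \<le> c}"
  have qm[measurable]: "?q \<in> borel_measurable ?\<nu>"
    unfolding symexp_def by measurable
  have Lm[measurable]: "?L \<in> sets ?\<nu>" by measurable
  have Ksp: "K \<subseteq> space ?\<nu>" using sets.sets_into_space[OF Km] .
  define A where "A = emeasure ?\<nu> {z \<in> space ?\<nu>. (\<lambda>j\<in>{..<n}. z j - y j) \<in> K}"
  define W where "W = (\<lambda>x z. ennreal (exp (\<Sum>j<n. \<bar>z j\<bar> - \<bar>z j + x j\<bar>)))"
  have Wm[measurable]: "W x \<in> borel_measurable ?\<nu>" for x
    unfolding W_def symexp_def by measurable
  have A1: "A = (\<integral>\<^sup>+z. indicator K (\<lambda>j\<in>{..<n}. z j - y j) \<partial>?\<nu>)"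
  proof -
    have "{z \<in> space ?\<nu>. (\<lambda>j\<in>{..<n}. z j - y j) \<in> K} \<in> sets ?\<nu>" by measurable
    then have "A = (\<integral>\<^sup>+z. indicator {z \<in> space ?\<nu>. (\<lambda>j\<in>{..<n}. z j - y j) \<in> K} z \<partial>?\<nu>)"
      unfolding A_def by (rule nn_integral_indicator[symmetric])
    also have "\<dots> = (\<integral>\<^sup>+z. indicator K (\<lambda>j\<in>{..<n}. z j - y j) \<partial>?\<nu>)"
      by (rule nn_integral_cong) (auto split: split_indicator)
    finally show ?thesis .
  qed
  also have "\<dots> = (\<integral>\<^sup>+z. indicator K z * W y z \<partial>?\<nu>)"
    unfolding W_def by (rule symexp_shift) measurable
  finally have Ay: "A = (\<integral>\<^sup>+z. indicator K z * W y z \<partial>?\<nu>)" .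
  have "A = (\<integral>\<^sup>+z. indicator K (\<lambda>j\<in>{..<n}. (\<lambda>j\<in>{..<n}. - z j) j - y j) \<partial>?\<nu>)"
    unfolding A1 by (rule symexp_refl[symmetric]) measurable
  also have "\<dots> = (\<integral>\<^sup>+z. indicator K (\<lambda>j\<in>{..<n}. z j - (- y j)) \<partial>?\<nu>)"
  proof (rule nn_integral_cong)
    fix z
    have e1: "(\<lambda>j\<in>{..<n}. (\<lambda>j\<in>{..<n}. - z j) j - y j) = (\<lambda>j\<in>{..<n}. - (\<lambda>j\<in>{..<n}. z j - (- y j)) j)"
      by (auto simp: fun_eq_iff)
    have e2: "(\<lambda>j\<in>{..<n}. z j - (- y j)) = (\<lambda>j\<in>{..<n}. - (\<lambda>j\<in>{..<n}. (\<lambda>j\<in>{..<n}. - z j) j - y j) j)"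
      by (auto simp: fun_eq_iff)
    show "indicator K (\<lambda>j\<in>{..<n}. (\<lambda>j\<in>{..<n}. - z j) j - y j) = (indicator K (\<lambda>j\<in>{..<n}. z j - (- y j)) :: ennreal)"
      using Ksym[of "\<lambda>j\<in>{..<n}. z j - (- y j)"] Ksym[of "\<lambda>j\<in>{..<n}. (\<lambda>j\<in>{..<n}. - z j) j - y j"]
      unfolding e1[symmetric] e2[symmetric] by (auto split: split_indicator)
  qed
  also have "\<dots> = (\<integral>\<^sup>+z. indicator K z * W (\<lambda>j. - y j) z \<partial>?\<nu>)"
    unfolding W_def by (rule symexp_shift) measurable
  finally have Amy: "A = (\<integral>\<^sup>+z. indicator K z * W (\<lambda>j. - y j) z \<partial>?\<nu>)" .
  have "A + A = (\<integral>\<^sup>+z. indicator K z * W y z \<partial>?\<nu>) + (\<integral>\<^sup>+z. indicator K z * W (\<lambda>j. - y j) z \<partial>?\<nu>)"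
    using Ay Amy by metis
  also have "\<dots> = (\<integral>\<^sup>+z. indicator K z * (W y z + W (\<lambda>j. - y j) z) \<partial>?\<nu>)"
    by (subst nn_integral_add[symmetric]) (auto simp: distrib_left)
  also have "\<dots> \<ge> (\<integral>\<^sup>+z. 2 * ennreal (exp (- (?V + c))) * indicator (K \<inter> ?L) z \<partial>?\<nu>)"
  proof (rule nn_integral_mono)
    fix z assume z: "z \<in> space ?\<nu>"
    show "2 * ennreal (exp (- (?V + c))) * indicator (K \<inter> ?L) z \<le> indicator K z * (W y z + W (\<lambda>j. - y j) z)"
    proof (cases "z \<in> K \<inter> ?L")
      case True
      let ?a = "\<Sum>j<n. \<bar>z j\<bar> - \<bar>z j + y j\<bar>"
      let ?b = "\<Sum>j<n. \<bar>z j\<bar> - \<bar>z j + - y j\<bar>"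
      have "- (?V + ?q z) = (\<Sum>j<n. - (\<bar>v j\<bar> + (if \<bar>z j\<bar> \<le> \<bar>u j\<bar> then \<bar>u j\<bar> else 0)))"
        by (simp add: sum_subtractf sum_negf)
      also have "\<dots> \<le> (\<Sum>j<n. ((\<bar>z j\<bar> - \<bar>z j + y j\<bar>) + (\<bar>z j\<bar> - \<bar>z j + - y j\<bar>)) / 2)"
        by (intro sum_mono pt_ineq yuv) auto
      also have "\<dots> = (?a + ?b) / 2"
        by (simp only: sum.distrib[symmetric] sum_divide_distrib[symmetric])
      finally have ab: "- (?V + ?q z) \<le> (?a + ?b) / 2" .
      have "?q z \<le> c" using True by auto
      then have "2 * exp (- (?V + c)) \<le> 2 * exp ((?a + ?b) / 2)"
        using ab by simp
      also have "\<dots> \<le> exp ?a + exp ?b" by (rule amgm_exp)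
      finally have "ennreal (2 * exp (- (?V + c))) \<le> ennreal (exp ?a + exp ?b)"
        by (rule ennreal_leI)
      moreover have "2 * ennreal (exp (- (?V + c))) = ennreal (2 * exp (- (?V + c)))"
        by (simp add: ennreal_mult)
      ultimately show ?thesis using True
        by (simp add: W_def ennreal_plus[symmetric] del: ennreal_plus)
    next
      case False
      then show ?thesis by simp
    qed
  qed
  also have "(\<integral>\<^sup>+z. 2 * ennreal (exp (- (?V + c))) * indicator (K \<inter> ?L) z \<partial>?\<nu>)
       = 2 * (ennreal (exp (- (?V + c))) * emeasure ?\<nu> (K \<inter> ?L))"
    by (subst nn_integral_cmult) (auto simp: mult.assoc)
  finally have "2 * (ennreal (exp (- (?V + c))) * emeasure ?\<nu> (K \<inter> ?L)) \<le> 2 * A"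
    by (simp add: mult_2)
  then have "ennreal (exp (- (?V + c))) * emeasure ?\<nu> (K \<inter> ?L) \<le> A"
    by (subst (asm) ennreal_mult_le_mult_iff) auto
  then show ?thesis unfolding A_def .
qed

definition Phi :: "nat \<Rightarrow> nat \<Rightarrow> (nat \<Rightarrow> nat \<Rightarrow> nat \<Rightarrow> real) \<Rightarrow> (nat \<Rightarrow> real) set \<Rightarrow> (nat \<Rightarrow> real) \<Rightarrow> (nat \<Rightarrow> real) \<Rightarrow> ennreal" where
  "Phi n m a T g x = (SUP t\<in>T. ennreal \<bar>\<Sum>i<n. \<Sum>j<n. \<Sum>k<m. a i j k * g i * x j * t k\<bar>)"

lemma beta_Phi: "beta n m a T x = (\<integral>\<^sup>+g. Phi n m a T g x \<partial>gauss n)"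
  unfolding beta_def Phi_def ..

lemma ges_Phi: "gauss_exp_sup n m a T = (\<integral>\<^sup>+ge. Phi n m a T (fst ge) (snd ge) \<partial>(gauss n \<Otimes>\<^sub>M symexp n))"
  unfolding gauss_exp_sup_def Phi_def ..

lemma Phi_dense:
  assumes "T \<noteq> {}"
  obtains D where "countable D" "D \<subseteq> T" "D \<noteq> {}" "\<And>g x. Phi n m a T g x = Phi n m a D g x"
proof -
  obtain D :: "(nat \<Rightarrow> real) set" where D: "countable D" "D \<subseteq> T" "T \<subseteq> closure D"
    by (rule separable)
  have Dne: "D \<noteq> {}" using D assms by auto
  have "Phi n m a T g x = Phi n m a D g x" for g x
  proof (rule antisym)
    show "Phi n m a D g x \<le> Phi n m a T g x"
      unfolding Phi_def using D(2) by (rule SUP_subset_mono) simp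
    let ?c = "\<lambda>t::nat\<Rightarrow>real. \<Sum>i<n. \<Sum>j<n. \<Sum>k<m. a i j k * g i * x j * t k"
    have cc: "continuous_on UNIV ?c"
      by (intro continuous_intros continuous_on_product_coordinates)
    show "Phi n m a T g x \<le> Phi n m a D g x"
    proof (cases "Phi n m a D g x = \<top>")
      case True then show ?thesis by simp
    next
      case False
      let ?r = "enn2real (Phi n m a D g x)"
      have cl: "closed {t. \<bar>?c t\<bar> \<le> ?r}"
        using cc by (intro closed_Collect_le continuous_intros) auto
      have "D \<subseteq> {t. \<bar>?c t\<bar> \<le> ?r}"
      proof
        fix t assume t: "t \<in> D"
        have "ennreal \<bar>?c t\<bar> \<le> Phi n m a D g x"
          unfolding Phi_def using t by (rule SUP_upper)
        then have "enn2real (ennreal \<bar>?c t\<bar>) \<le> ?r"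
          by (rule enn2real_mono) (use False in \<open>simp add: top.not_eq_extremum\<close>)
        then show "t \<in> {t. \<bar>?c t\<bar> \<le> ?r}" by simp
      qed
      then have "closure D \<subseteq> {t. \<bar>?c t\<bar> \<le> ?r}"
        using cl by (rule closure_minimal)
      then have "\<forall>t\<in>T. \<bar>?c t\<bar> \<le> ?r" using D(3) by auto
      have e: "ennreal ?r = Phi n m a D g x"
        using False by (simp add: top.not_eq_extremum)
      show ?thesis unfolding Phi_def[of n m a T g x]
      proof (rule SUP_least)
        fix t assume "t \<in> T"
        then have "ennreal \<bar>?c t\<bar> \<le> ennreal ?r" using \<open>\<forall>t\<in>T. \<bar>?c t\<bar> \<le> ?r\<close> by (simp add: ennreal_leI)
        then show "ennreal \<bar>?c t\<bar> \<le> Phi n m a D g x" using e by simp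
      qed
    qed
  qed
  then show ?thesis using D Dne that by blast
qed

lemma Phi_meas_pair:
  fixes M1 M2 :: "real measure"
  assumes D[simp]: "countable D" and S1[measurable_cong]: "sets M1 = sets borel" and S2[measurable_cong]: "sets M2 = sets borel"
  shows "(\<lambda>(g,x). Phi n m a D g x) \<in> borel_measurable (PiM {..<n} (\<lambda>_. M1) \<Otimes>\<^sub>M PiM {..<n} (\<lambda>_. M2))"
  unfolding Phi_def by measurable

lemma Phi_meas_pair2:
  fixes M1 M2 :: "real measure"
  assumes D[simp]: "countable D" and S1[measurable_cong]: "sets M1 = sets borel" and S2[measurable_cong]: "sets M2 = sets borel"
  shows "(\<lambda>(x,g). Phi n m a D g x) \<in> borel_measurable (PiM {..<n} (\<lambda>_. M2) \<Otimes>\<^sub>M PiM {..<n} (\<lambda>_. M1))"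
  unfolding Phi_def by measurable

lemma prob_space_gauss: "prob_space (gauss n)"
  unfolding gauss_def by (rule prob_space_PiM) (simp add: prob_space_normal_density)

lemma Phi_restrict: "Phi n m a D g x = Phi n m a D g (restrict x {..<n})"
  unfolding Phi_def by (intro SUP_cong refl arg_cong[where f=ennreal] arg_cong[where f=abs] sum.cong) auto

lemma Phi_meas3:
  fixes M1 M2 :: "real measure"
  assumes D[simp]: "countable D" and S1[measurable_cong]: "sets M1 = sets borel" and S2[measurable_cong]: "sets M2 = sets borel"
  shows "(\<lambda>g. Phi n m a D g x) \<in> borel_measurable (PiM {..<n} (\<lambda>_. M1))"
proof -
  have sp: "restrict x {..<n} \<in> space (PiM {..<n} (\<lambda>_. M2))"
    by (simp add: space_PiM S2 sets_eq_imp_space_eq[OF S2])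
  have "(\<lambda>g. (\<lambda>(g,x). Phi n m a D g x) (g, restrict x {..<n})) \<in> borel_measurable (PiM {..<n} (\<lambda>_. M1))"
    by (rule measurable_compose[OF measurable_Pair2'[OF sp] Phi_meas_pair[OF D S1 S2]])
  then show ?thesis by (simp add: Phi_restrict[symmetric])
qed

context
  fixes n m :: nat and a :: "nat \<Rightarrow> nat \<Rightarrow> nat \<Rightarrow> real" and T :: "(nat \<Rightarrow> real) set"
  assumes Tne: "T \<noteq> {}"
begin

lemma PhiT_meas:
  shows "(\<lambda>(g,x). Phi n m a T g x) \<in> borel_measurable (gauss n \<Otimes>\<^sub>M symexp n)"
    and "(\<lambda>(x,g). Phi n m a T g x) \<in> borel_measurable (symexp n \<Otimes>\<^sub>M gauss n)"
    and "(\<lambda>g. Phi n m a T g x) \<in> borel_measurable (gauss n)"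
proof -
  obtain D where D: "countable D" "\<And>g x. Phi n m a T g x = Phi n m a D g x"
    using Phi_dense[OF Tne] by metis
  have e: "Phi n m a T = Phi n m a D" using D(2) by (intro ext) auto
  show "(\<lambda>(g,x). Phi n m a T g x) \<in> borel_measurable (gauss n \<Otimes>\<^sub>M symexp n)"
    "(\<lambda>(x,g). Phi n m a T g x) \<in> borel_measurable (symexp n \<Otimes>\<^sub>M gauss n)"
    "(\<lambda>g. Phi n m a T g x) \<in> borel_measurable (gauss n)"
    unfolding e gauss_def symexp_def
    by (rule Phi_meas_pair[OF D(1)] Phi_meas_pair2[OF D(1)] Phi_meas3[OF D(1)]; simp)+
qed

lemma beta_meas[measurable]: "beta n m a T \<in> borel_measurable (symexp n)"
proof -
  interpret G: prob_space "gauss n" by (rule prob_space_gauss)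
  have "(\<lambda>x. \<integral>\<^sup>+g. Phi n m a T g x \<partial>gauss n) \<in> borel_measurable (symexp n)"
    using PhiT_meas(2) by (rule G.borel_measurable_nn_integral)
  then show ?thesis by (simp add: beta_Phi[abs_def])
qed

lemma ges_beta: "gauss_exp_sup n m a T = (\<integral>\<^sup>+x. beta n m a T x \<partial>symexp n)"
proof -
  interpret G: prob_space "gauss n" by (rule prob_space_gauss)
  interpret E: prob_space "symexp n" by (rule prob_space_symexp)
  interpret pair_sigma_finite "gauss n" "symexp n" ..
  have "(\<integral>\<^sup>+x. (\<integral>\<^sup>+g. (\<lambda>(g,x). Phi n m a T g x) (g, x) \<partial>gauss n) \<partial>symexp n)
      = integral\<^sup>N (gauss n \<Otimes>\<^sub>M symexp n) (\<lambda>(g,x). Phi n m a T g x)"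
    by (rule nn_integral_snd) (rule PhiT_meas(1))
  then show ?thesis
    unfolding ges_Phi beta_Phi by (simp add: case_prod_beta')
qed

lemma Phi_add: "Phi n m a T g (\<lambda>j. x j + y j) \<le> Phi n m a T g x + Phi n m a T g y"
  unfolding Phi_def
proof (rule SUP_least)
  fix t assume t: "t \<in> T"
  let ?A = "\<Sum>i<n. \<Sum>j<n. \<Sum>k<m. a i j k * g i * x j * t k"
  let ?B = "\<Sum>i<n. \<Sum>j<n. \<Sum>k<m. a i j k * g i * y j * t k"
  have "(\<Sum>i<n. \<Sum>j<n. \<Sum>k<m. a i j k * g i * (x j + y j) * t k) = ?A + ?B"
    by (simp add: algebra_simps sum.distrib)
  then have "ennreal \<bar>\<Sum>i<n. \<Sum>j<n. \<Sum>k<m. a i j k * g i * (x j + y j) * t k\<bar> \<le> ennreal \<bar>?A\<bar> + ennreal \<bar>?B\<bar>"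
    by (simp add: ennreal_plus[symmetric] del: ennreal_plus)
  also have "\<dots> \<le> (SUP t\<in>T. ennreal \<bar>\<Sum>i<n. \<Sum>j<n. \<Sum>k<m. a i j k * g i * x j * t k\<bar>) +
                  (SUP t\<in>T. ennreal \<bar>\<Sum>i<n. \<Sum>j<n. \<Sum>k<m. a i j k * g i * y j * t k\<bar>)"
    using t by (intro add_mono SUP_upper)
  finally show "ennreal \<bar>\<Sum>i<n. \<Sum>j<n. \<Sum>k<m. a i j k * g i * (x j + y j) * t k\<bar> \<le> \<dots>" .
qed

lemma beta_add: "beta n m a T (\<lambda>j. x j + y j) \<le> beta n m a T x + beta n m a T y"
proof -
  have "beta n m a T (\<lambda>j. x j + y j) \<le> (\<integral>\<^sup>+g. Phi n m a T g x + Phi n m a T g y \<partial>gauss n)"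
    unfolding beta_Phi by (intro nn_integral_mono Phi_add)
  also have "\<dots> = beta n m a T x + beta n m a T y"
    unfolding beta_Phi by (rule nn_integral_add) (rule PhiT_meas(3))+
  finally show ?thesis .
qed

lemma Phi_scale: "Phi n m a T g (\<lambda>j. c * x j) = ennreal \<bar>c\<bar> * Phi n m a T g x"
proof -
  have "(\<Sum>i<n. \<Sum>j<n. \<Sum>k<m. a i j k * g i * (c * x j) * t k) = c * (\<Sum>i<n. \<Sum>j<n. \<Sum>k<m. a i j k * g i * x j * t k)" for t
    by (simp add: sum_distrib_left algebra_simps)
  then have "ennreal \<bar>\<Sum>i<n. \<Sum>j<n. \<Sum>k<m. a i j k * g i * (c * x j) * t k\<bar> = ennreal \<bar>c\<bar> * ennreal \<bar>\<Sum>i<n. \<Sum>j<n. \<Sum>k<m. a i j k * g i * x j * t k\<bar>" for t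
    by (simp add: abs_mult ennreal_mult)
  then show ?thesis unfolding Phi_def by (simp add: SUP_mult_left_ennreal)
qed

lemma beta_scale: "beta n m a T (\<lambda>j. c * x j) = ennreal \<bar>c\<bar> * beta n m a T x"
  unfolding beta_Phi Phi_scale by (rule nn_integral_cmult) (rule PhiT_meas(3))

lemma beta_cong: "(\<And>j. j < n \<Longrightarrow> x j = y j) \<Longrightarrow> beta n m a T x = beta n m a T y"
  unfolding beta_def by (intro nn_integral_cong SUP_cong refl arg_cong[where f=ennreal] arg_cong[where f=abs] sum.cong) auto

lemma beta_zero: "beta n m a T (\<lambda>j. 0) = 0"
  using beta_scale[of 0 "\<lambda>j. 0"] by simp

lemma beta_swap: "beta n m a T (\<lambda>j. x j - y j) = beta n m a T (\<lambda>j. y j - x j)"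
  using beta_scale[of "-1" "\<lambda>j. y j - x j"] by simp

lemma beta_tri: "beta n m a T (\<lambda>j. x j - z j) \<le> beta n m a T (\<lambda>j. x j - y j) + beta n m a T (\<lambda>j. y j - z j)"
  using beta_add[of "\<lambda>j. x j - y j" "\<lambda>j. y j - z j"] by simp

end

lemma markov_enn:
  assumes [measurable]: "f \<in> borel_measurable M"
  shows "t * emeasure M {z \<in> space M. t < f z} \<le> integral\<^sup>N M f"
proof -
  have "t * emeasure M {z \<in> space M. t < f z} = (\<integral>\<^sup>+z. t * indicator {z \<in> space M. t < f z} z \<partial>M)"
    by (rule nn_integral_cmult_indicator[symmetric]) measurable
  also have "\<dots> \<le> integral\<^sup>N M f"
    by (intro nn_integral_mono) (auto split: split_indicator)
  finally show ?thesis .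
qed

lemma markov_quarter:
  assumes P: "prob_space M" and [measurable]: "f \<in> borel_measurable M" and fin: "integral\<^sup>N M f < \<top>"
  shows "measure M {z \<in> space M. 4 * integral\<^sup>N M f < f z} \<le> 1/4"
proof -
  interpret prob_space M by (rule P)
  let ?I = "integral\<^sup>N M f"
  let ?S = "{z \<in> space M. 4 * ?I < f z}"
  show ?thesis
  proof (cases "?I = 0")
    case True
    then have "emeasure M {z \<in> space M. f z \<noteq> 0} = 0"
      by (subst nn_integral_0_iff[symmetric]) auto
    moreover have "?S \<subseteq> {z \<in> space M. f z \<noteq> 0}" using True by auto
    moreover have "{z \<in> space M. f z \<noteq> 0} \<in> sets M" by measurable
    ultimately have "emeasure M ?S = 0"
      by (metis (no_types, lifting) emeasure_eq_0)
    then show ?thesis by (simp add: emeasure_eq_measure)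
  next
    case False
    obtain r where r: "?I = ennreal r" "0 \<le> r" using fin by (cases ?I) auto
    then have rpos: "0 < r" using False by (simp add: order_neq_le_trans)
    have "ennreal (4 * r) * ennreal (measure M ?S) \<le> ennreal r"
      using markov_enn[of f M "4 * ?I"] r by (simp add: emeasure_eq_measure ennreal_mult)
    then have "4 * r * measure M ?S \<le> r"
      using rpos by (simp add: ennreal_mult[symmetric])
    then show ?thesis using rpos by (simp add: field_simps)
  qed
qed

context
  fixes n m :: nat and a :: "nat \<Rightarrow> nat \<Rightarrow> nat \<Rightarrow> real" and T :: "(nat \<Rightarrow> real) set" and p :: real
  assumes Tne: "T \<noteq> {}" and p1: "1 \<le> p" and fin: "gauss_exp_sup n m a T < \<top>"
begin

definition "Kset = {z \<in> space (symexp n). beta n m a T z \<le> 4 * gauss_exp_sup n m a T}"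
definition "Aset x = {z \<in> space (symexp n). beta n m a T (\<lambda>j. z j - 16 * sqrt p * x j) \<le> 4 * gauss_exp_sup n m a T}"

lemma Kset_m[measurable]: "Kset \<in> sets (symexp n)"
  unfolding Kset_def using beta_meas[OF Tne] by measurable

lemma Aset_m[measurable]: "Aset x \<in> sets (symexp n)"
proof -
  have "(\<lambda>z. beta n m a T (\<lambda>j\<in>{..<n}. z j - 16 * sqrt p * x j)) \<in> borel_measurable (symexp n)"
    using measurable_compose[OF restrict_shift_m beta_meas[OF Tne]] by simp
  moreover have "beta n m a T (\<lambda>j\<in>{..<n}. z j - 16 * sqrt p * x j) = beta n m a T (\<lambda>j. z j - 16 * sqrt p * x j)" for z
    using Tne by (intro beta_cong) auto
  ultimately have "(\<lambda>z. beta n m a T (\<lambda>j. z j - 16 * sqrt p * x j)) \<in> borel_measurable (symexp n)"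
    by simp
  then show ?thesis unfolding Aset_def by measurable
qed

lemma Kset_compl: "measure (symexp n) (space (symexp n) - Kset) \<le> 1/4"
proof -
  have "space (symexp n) - Kset = {z \<in> space (symexp n). 4 * (\<integral>\<^sup>+x. beta n m a T x \<partial>symexp n) < beta n m a T z}"
    unfolding Kset_def ges_beta[OF Tne] by auto
  also have "measure (symexp n) \<dots> \<le> 1/4"
    using fin by (intro markov_quarter prob_space_symexp beta_meas[OF Tne]) (simp add: ges_beta[OF Tne])
  finally show ?thesis .
qed


lemma Aset_lower:
  assumes x: "x \<in> KB n p"
  shows "exp (- (1040 * p)) / 2 \<le> measure (symexp n) (Aset x)"
proof -
  interpret E: prob_space "symexp n" by (rule prob_space_symexp)
  let ?\<nu> = "symexp n"
  let ?l = "16 * sqrt p"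
  have p0: "0 < p" using p1 by simp
  obtain y0 z0 where xe: "x = (\<lambda>j. y0 j + sqrt p * z0 j)" and y0: "y0 \<in> B2 n" and z0: "z0 \<in> B1 n"
    using x unfolding KB_def by blast
  have y0s: "(\<Sum>j<n. (y0 j)\<^sup>2) \<le> 1" using y0 unfolding B2_def by auto
  have z0s: "(\<Sum>j<n. \<bar>z0 j\<bar>) \<le> 1" using z0 unfolding B1_def by auto
  define u where "u = (\<lambda>j. ?l * y0 j)"
  define v where "v = (\<lambda>j. ?l * sqrt p * z0 j)"
  define c where "c = 1024 * p"
  let ?q = "\<lambda>z. (\<Sum>j<n. if \<bar>z j\<bar> \<le> \<bar>u j\<bar> then \<bar>u j\<bar> else 0::real)"
  let ?L = "{z \<in> space ?\<nu>. ?q z \<le> c}"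
  have qm[measurable]: "?q \<in> borel_measurable ?\<nu>"
    unfolding symexp_def by measurable
  have V: "(\<Sum>j<n. \<bar>v j\<bar>) \<le> 16 * p"
  proof -
    have "(\<Sum>j<n. \<bar>v j\<bar>) = 16 * p * (\<Sum>j<n. \<bar>z0 j\<bar>)"
      using p0 by (simp add: v_def abs_mult sum_distrib_left mult.assoc)
    also have "\<dots> \<le> 16 * p" using z0s p0 by simp
    finally show ?thesis .
  qed
  have U: "(\<Sum>j<n. (u j)\<^sup>2) \<le> 256 * p"
  proof -
    have "(\<Sum>j<n. (u j)\<^sup>2) = 256 * p * (\<Sum>j<n. (y0 j)\<^sup>2)"
      using p0 by (simp add: u_def power_mult_distrib sum_distrib_left)
    also have "\<dots> \<le> 256 * p" using y0s p0 by simp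
    finally show ?thesis .
  qed
  have Lc: "measure ?\<nu> (space ?\<nu> - ?L) \<le> 1/4"
  proof -
    have eq: "ennreal (?q z) = (\<Sum>j<n. ennreal \<bar>u j\<bar> * indicator {y. \<bar>y\<bar> \<le> \<bar>u j\<bar>} (z j))" for z
    proof -
      have "(\<Sum>j<n. ennreal \<bar>u j\<bar> * indicator {y. \<bar>y\<bar> \<le> \<bar>u j\<bar>} (z j)) = (\<Sum>j<n. ennreal (if \<bar>z j\<bar> \<le> \<bar>u j\<bar> then \<bar>u j\<bar> else 0))"
        by (intro sum.cong) (auto split: split_indicator)
      also have "\<dots> = ennreal (?q z)"
        by (rule sum_ennreal) auto
      finally show ?thesis by simp
    qed
    have "(\<integral>\<^sup>+z. ennreal (?q z) \<partial>?\<nu>) \<le> ennreal (256 * p)"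
      unfolding eq using symexp_q[of n u] U by (meson ennreal_leI order_trans)
    moreover have "ennreal c * emeasure ?\<nu> {z \<in> space ?\<nu>. ennreal c < ennreal (?q z)} \<le> (\<integral>\<^sup>+z. ennreal (?q z) \<partial>?\<nu>)"
      by (rule markov_enn) measurable
    moreover have "{z \<in> space ?\<nu>. ennreal c < ennreal (?q z)} = space ?\<nu> - ?L"
      using p0 by (auto simp: c_def ennreal_less_iff)
    ultimately have "ennreal c * ennreal (measure ?\<nu> (space ?\<nu> - ?L)) \<le> ennreal (256 * p)"
      by (simp add: E.emeasure_eq_measure)
    then have "c * measure ?\<nu> (space ?\<nu> - ?L) \<le> 256 * p"
      using p0 by (simp add: c_def ennreal_mult[symmetric])
    then show ?thesis using p0 by (simp add: c_def field_simps)
  qed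
  have KL: "1/2 \<le> measure ?\<nu> (Kset \<inter> ?L)"
  proof -
    have "space ?\<nu> = (Kset \<inter> ?L) \<union> (space ?\<nu> - Kset) \<union> (space ?\<nu> - ?L)"
      using sets.sets_into_space[OF Kset_m] by auto
    then have "measure ?\<nu> (space ?\<nu>) \<le> measure ?\<nu> (Kset \<inter> ?L) + measure ?\<nu> (space ?\<nu> - Kset) + measure ?\<nu> (space ?\<nu> - ?L)"
    proof -
      have Lm: "?L \<in> sets ?\<nu>" by measurable
      have "measure ?\<nu> ((Kset \<inter> ?L) \<union> (space ?\<nu> - Kset) \<union> (space ?\<nu> - ?L))
          \<le> measure ?\<nu> ((Kset \<inter> ?L) \<union> (space ?\<nu> - Kset)) + measure ?\<nu> (space ?\<nu> - ?L)"
        using Lm by (intro measure_Un_le) auto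
      also have "measure ?\<nu> ((Kset \<inter> ?L) \<union> (space ?\<nu> - Kset)) \<le> measure ?\<nu> (Kset \<inter> ?L) + measure ?\<nu> (space ?\<nu> - Kset)"
        using Lm by (intro measure_Un_le) auto
      finally show ?thesis using \<open>space ?\<nu> = _\<close> by simp
    qed
    then show ?thesis using Lc Kset_compl by (simp add: E.prob_space)
  qed
  have Ksym: "(\<lambda>j\<in>{..<n}. - z j) \<in> Kset" if "z \<in> Kset" for z
  proof -
    have "beta n m a T (\<lambda>j\<in>{..<n}. - z j) = beta n m a T (\<lambda>j. (-1) * z j)"
      using Tne by (intro beta_cong) auto
    also have "\<dots> = beta n m a T z" using beta_scale[OF Tne, where c="-1" and x=z] by simp
    finally show ?thesis using that measurable_space[OF restrict_neg_m, of z n] unfolding Kset_def by auto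
  qed
  have yuv: "?l * x j = u j + v j" for j
    unfolding xe u_def v_def by (simp add: algebra_simps)
  have main: "ennreal (exp (- ((\<Sum>j<n. \<bar>v j\<bar>) + c))) * emeasure ?\<nu> (Kset \<inter> ?L)
        \<le> emeasure ?\<nu> {z \<in> space ?\<nu>. (\<lambda>j\<in>{..<n}. z j - ?l * x j) \<in> Kset}"
    by (rule shift_lower[OF Kset_m Ksym yuv])
  have Aeq: "{z \<in> space ?\<nu>. (\<lambda>j\<in>{..<n}. z j - ?l * x j) \<in> Kset} = Aset x"
  proof -
    have "beta n m a T (\<lambda>j\<in>{..<n}. z j - ?l * x j) = beta n m a T (\<lambda>j. z j - ?l * x j)" for z
      using Tne by (intro beta_cong) auto
    then show ?thesis unfolding Kset_def Aset_def
      using measurable_space[OF restrict_shift_m, of _ n] by auto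
  qed
  have "exp (- (1040 * p)) \<le> exp (- ((\<Sum>j<n. \<bar>v j\<bar>) + c))"
    using V by (simp add: c_def)
  then have "exp (- (1040 * p)) * measure ?\<nu> (Kset \<inter> ?L) \<le> exp (- ((\<Sum>j<n. \<bar>v j\<bar>) + c)) * measure ?\<nu> (Kset \<inter> ?L)"
    by (simp add: mult_right_mono)
  also have "\<dots> \<le> measure ?\<nu> (Aset x)"
    using main unfolding Aeq by (simp add: E.emeasure_eq_measure ennreal_mult[symmetric])
  finally have "exp (- (1040 * p)) * measure ?\<nu> (Kset \<inter> ?L) \<le> measure ?\<nu> (Aset x)" .
  moreover have "exp (- (1040 * p)) / 2 \<le> exp (- (1040 * p)) * measure ?\<nu> (Kset \<inter> ?L)"
    using KL by (simp add: mult_left_mono[of "1/2" _ "exp (- (1040 * p))", simplified])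
  ultimately show ?thesis by linarith
qed


definition "rad = ennreal (1 / (2 * sqrt p)) * gauss_exp_sup n m a T"

definition "pack P \<longleftrightarrow> finite P \<and> P \<subseteq> KB n p \<and>
   (\<forall>x\<in>P. \<forall>x'\<in>P. x \<noteq> x' \<longrightarrow> rad < beta n m a T (\<lambda>j. x j - x' j))"

lemma Aset_disj:
  assumes "pack P" "x \<in> P" "x' \<in> P" "x \<noteq> x'"
  shows "Aset x \<inter> Aset x' = {}"
proof (rule ccontr)
  let ?l = "16 * sqrt p"
  let ?M = "gauss_exp_sup n m a T"
  have p0: "0 < p" using p1 by simp
  assume "Aset x \<inter> Aset x' \<noteq> {}"
  then obtain z where z1: "beta n m a T (\<lambda>j. z j - ?l * x j) \<le> 4 * ?M"
      and z2: "beta n m a T (\<lambda>j. z j - ?l * x' j) \<le> 4 * ?M"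
    unfolding Aset_def by auto
  have "beta n m a T (\<lambda>j. ?l * x j - ?l * x' j) \<le> beta n m a T (\<lambda>j. ?l * x j - z j) + beta n m a T (\<lambda>j. z j - ?l * x' j)"
    by (rule beta_tri[OF Tne])
  also have "beta n m a T (\<lambda>j. ?l * x j - z j) = beta n m a T (\<lambda>j. z j - ?l * x j)"
    by (rule beta_swap[OF Tne])
  also have "\<dots> + beta n m a T (\<lambda>j. z j - ?l * x' j) \<le> 4 * ?M + 4 * ?M"
    using z1 z2 by (rule add_mono)
  also have "beta n m a T (\<lambda>j. ?l * x j - ?l * x' j) = ennreal ?l * beta n m a T (\<lambda>j. x j - x' j)"
    using beta_scale[OF Tne, where c="?l" and x="\<lambda>j. x j - x' j"] p0 by (simp add: algebra_simps)
  finally have le: "ennreal ?l * beta n m a T (\<lambda>j. x j - x' j) \<le> 8 * ?M"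
    by (simp add: mult_2[symmetric] mult.assoc[symmetric])
  have "beta n m a T (\<lambda>j. x j - x' j) = ennreal (1 / ?l) * (ennreal ?l * beta n m a T (\<lambda>j. x j - x' j))"
    using p0 by (simp add: mult.assoc[symmetric] ennreal_mult[symmetric])
  also have "\<dots> \<le> ennreal (1 / ?l) * (8 * ?M)"
    using le by (rule mult_left_mono) simp
  also have "\<dots> = rad"
  proof -
    have "ennreal (1 / ?l) * 8 = ennreal (1 / (2 * sqrt p))"
    proof -
      have "ennreal (1 / ?l) * 8 = ennreal (1 / ?l) * ennreal 8" by simp
      also have "\<dots> = ennreal (1 / ?l * 8)" using p0 by (subst ennreal_mult) auto
      also have "1 / ?l * 8 = 1 / (2 * sqrt p)" by simp
      finally show ?thesis .
    qed
    then show ?thesis unfolding rad_def by (simp add: mult.assoc[symmetric])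
  qed
  finally have "beta n m a T (\<lambda>j. x j - x' j) \<le> rad" .
  moreover have "rad < beta n m a T (\<lambda>j. x j - x' j)" using assms unfolding pack_def by blast
  ultimately show False by simp
qed

lemma pack_card:
  assumes P: "pack P"
  shows "real (card P) \<le> 2 * exp (1040 * p)"
proof -
  interpret E: prob_space "symexp n" by (rule prob_space_symexp)
  have fP: "finite P" and sub: "P \<subseteq> KB n p" using P unfolding pack_def by auto
  have dis: "disjoint_family_on Aset P"
    unfolding disjoint_family_on_def using Aset_disj[OF P] by blast
  have "(\<Sum>x\<in>P. measure (symexp n) (Aset x)) = measure (symexp n) (\<Union>x\<in>P. Aset x)"
    using fP dis by (intro E.finite_measure_finite_Union[symmetric]) auto
  also have "\<dots> \<le> 1" by simp
  finally have s1: "(\<Sum>x\<in>P. measure (symexp n) (Aset x)) \<le> 1" .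
  have "real (card P) * (exp (- (1040 * p)) / 2) = (\<Sum>x\<in>P. exp (- (1040 * p)) / 2)" by simp
  also have "\<dots> \<le> (\<Sum>x\<in>P. measure (symexp n) (Aset x))"
    using sub by (intro sum_mono Aset_lower) auto
  finally have "real (card P) * (exp (- (1040 * p)) / 2) \<le> 1" using s1 by linarith
  then have "real (card P) * exp (- (1040 * p)) \<le> 2" by simp
  then have "real (card P) * exp (- (1040 * p)) * exp (1040 * p) \<le> 2 * exp (1040 * p)"
    by (simp add: mult_right_mono)
  then show ?thesis by (simp add: mult.assoc flip: exp_add)
qed


lemma cover_exists:
  "\<exists>(N::nat) (U::nat \<Rightarrow> (nat \<Rightarrow> real) set).
        real N \<le> exp (1041 * p) \<and>
        KB n p = (\<Union>i\<in>{1..N}. U i) \<and>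
        (\<forall>i\<in>{1..N}.
           (SUP x\<in>U i. SUP x'\<in>U i. beta n m a T (\<lambda>j. x j - x' j))
             \<le> ennreal (1 / sqrt p) * gauss_exp_sup n m a T)"
proof -
  have p0: "0 < p" using p1 by simp
  let ?B = "nat \<lceil>2 * exp (1040 * p)\<rceil>"
  define CS where "CS = {card P | P. pack P}"
  have CSb: "\<forall>k\<in>CS. k \<le> ?B"
  proof
    fix k assume "k \<in> CS"
    then obtain P where "pack P" "k = card P" unfolding CS_def by auto
    then have "real k \<le> 2 * exp (1040 * p)" using pack_card by simp
    then show "k \<le> ?B" by linarith
  qed
  then have fCS: "finite CS" by (meson finite_nat_set_iff_bounded_le)
  have "pack {}" unfolding pack_def by auto
  then have "0 \<in> CS" unfolding CS_def by force
  then have "Max CS \<in> CS" using fCS by (intro Max_in) auto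
  then obtain P0 where P0: "pack P0" "card P0 = Max CS" unfolding CS_def by auto
  have maxP: "card P \<le> card P0" if "pack P" for P
    using that fCS unfolding P0(2) CS_def by (intro Max_ge) auto
  have fP0: "finite P0" and subP0: "P0 \<subseteq> KB n p" using P0 unfolding pack_def by auto
  have cov: "\<exists>x\<in>P0. beta n m a T (\<lambda>j. w j - x j) \<le> rad" if w: "w \<in> KB n p" for w
  proof (rule ccontr)
    assume "\<not> ?thesis"
    then have far: "\<And>x. x \<in> P0 \<Longrightarrow> rad < beta n m a T (\<lambda>j. w j - x j)" by auto
    have far': "rad < beta n m a T (\<lambda>j. x j - w j)" if "x \<in> P0" for x
      using far[OF that] beta_swap[OF Tne, where x=x and y=w] by simp
    have "w \<notin> P0"
    proof
      assume "w \<in> P0"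
      then have "rad < beta n m a T (\<lambda>j. w j - w j)" by (rule far)
      then show False using beta_zero[OF Tne] by simp
    qed
    have "pack (insert w P0)"
      using P0(1) w far far' unfolding pack_def by auto
    then have "card (insert w P0) \<le> card P0" by (rule maxP)
    then show False using \<open>w \<notin> P0\<close> fP0 by simp
  qed
  obtain h where h: "bij_betw h {1..card P0} P0"
    using ex_bij_betw_nat_finite_1[OF fP0] by blast
  define U where "U = (\<lambda>i. {w \<in> KB n p. beta n m a T (\<lambda>j. w j - h i j) \<le> rad})"
  have "real (card P0) \<le> 2 * exp (1040 * p)" by (rule pack_card[OF P0(1)])
  also have "\<dots> \<le> exp p * exp (1040 * p)"
  proof -
    have "2 \<le> exp p" using exp_ge_add_one_self[of p] p1 by linarith
    then show ?thesis by simp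
  qed
  also have "\<dots> = exp (1041 * p)" by (simp flip: exp_add)
  finally have Nb: "real (card P0) \<le> exp (1041 * p)" .
  have Ueq: "KB n p = (\<Union>i\<in>{1..card P0}. U i)"
  proof
    show "(\<Union>i\<in>{1..card P0}. U i) \<subseteq> KB n p" unfolding U_def by auto
    show "KB n p \<subseteq> (\<Union>i\<in>{1..card P0}. U i)"
    proof
      fix w assume w: "w \<in> KB n p"
      obtain x where x: "x \<in> P0" "beta n m a T (\<lambda>j. w j - x j) \<le> rad" using cov[OF w] by blast
      obtain i where i: "i \<in> {1..card P0}" "h i = x"
      proof -
        have "x \<in> h ` {1..card P0}" using h x(1) unfolding bij_betw_def by simp
        then show ?thesis using that by blast
      qed
      show "w \<in> (\<Union>i\<in>{1..card P0}. U i)" using w x i unfolding U_def by auto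
    qed
  qed
  have diam: "(SUP x\<in>U i. SUP x'\<in>U i. beta n m a T (\<lambda>j. x j - x' j)) \<le> ennreal (1 / sqrt p) * gauss_exp_sup n m a T" for i
  proof (intro SUP_least)
    fix x x' assume x: "x \<in> U i" and x': "x' \<in> U i"
    have "beta n m a T (\<lambda>j. x j - x' j) \<le> beta n m a T (\<lambda>j. x j - h i j) + beta n m a T (\<lambda>j. h i j - x' j)"
      by (rule beta_tri[OF Tne])
    also have "beta n m a T (\<lambda>j. h i j - x' j) = beta n m a T (\<lambda>j. x' j - h i j)"
      by (rule beta_swap[OF Tne])
    also have "beta n m a T (\<lambda>j. x j - h i j) + \<dots> \<le> rad + rad"
      using x x' unfolding U_def by (intro add_mono) auto
    also have "rad + rad = ennreal (1 / sqrt p) * gauss_exp_sup n m a T"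
    proof -
      have "ennreal (1 / (2 * sqrt p)) + ennreal (1 / (2 * sqrt p)) = ennreal (1 / sqrt p)"
        using p0 by (subst ennreal_plus[symmetric]) auto
      then show ?thesis unfolding rad_def by (simp add: distrib_right[symmetric])
    qed
    finally show "beta n m a T (\<lambda>j. x j - x' j) \<le> ennreal (1 / sqrt p) * gauss_exp_sup n m a T" .
  qed
  show ?thesis using Nb Ueq diam by blast
qed

end

lemma main_inst:
  fixes n m :: nat and a :: "nat \<Rightarrow> nat \<Rightarrow> nat \<Rightarrow> real" and T :: "(nat \<Rightarrow> real) set" and p :: real
  assumes Tne: "T \<noteq> {}" and p1: "1 \<le> p"
  shows "\<exists>(N::nat) (U::nat \<Rightarrow> (nat \<Rightarrow> real) set).
        real N \<le> exp (1041 * p) \<and>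
        KB n p = (\<Union>i\<in>{1..N}. U i) \<and>
        (\<forall>i\<in>{1..N}.
           (SUP x\<in>U i. SUP x'\<in>U i. beta n m a T (\<lambda>j. x j - x' j))
             \<le> ennreal (1 / sqrt p) * gauss_exp_sup n m a T \<and>
           ennreal (1 / sqrt p) * gauss_exp_sup n m a T \<le> ennreal (1 / sqrt p) * sA n m a T)"
proof -
  have p0: "0 < p" using p1 by simp
  have second: "ennreal (1 / sqrt p) * gauss_exp_sup n m a T \<le> ennreal (1 / sqrt p) * sA n m a T"
  proof (rule mult_left_mono)
    show "gauss_exp_sup n m a T \<le> sA n m a T"
      unfolding sA_def ges_beta[OF Tne] by (simp add: add_increasing)
  qed simp
  show ?thesis
  proof (cases "gauss_exp_sup n m a T = \<top>")
    case True
    have top: "ennreal (1 / sqrt p) * gauss_exp_sup n m a T = \<top>"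
      using True p0 by (simp add: ennreal_mult_eq_top_iff)
    have "real 1 \<le> exp (1041 * p)" using p0 by simp
    moreover have "KB n p = (\<Union>i\<in>{1..1::nat}. (\<lambda>_. KB n p) i)" by auto
    ultimately show ?thesis using second top
      by (intro exI[of _ 1] exI[of _ "\<lambda>_. KB n p"]) simp
  next
    case False
    then have fin: "gauss_exp_sup n m a T < \<top>" by (simp add: top.not_eq_extremum)
    obtain N U where NU: "real N \<le> exp (1041 * p)" "KB n p = (\<Union>i\<in>{1..N}. U i)"
      "\<forall>i\<in>{1..N}. (SUP x\<in>U i. SUP x'\<in>U i. beta n m a T (\<lambda>j. x j - x' j))
             \<le> ennreal (1 / sqrt p) * gauss_exp_sup n m a T"
      using cover_exists[OF Tne p1 fin] by blast
    then show ?thesis using second by blast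
  qed
qed

theorem lemma4p5:
  "\<exists>C::real. \<forall>(n::nat) (m::nat) (a::nat \<Rightarrow> nat \<Rightarrow> nat \<Rightarrow> real) (T::(nat \<Rightarrow> real) set) (p::real).
     T \<noteq> {} \<and> T \<subseteq> vecs m \<and> p \<ge> 1 \<longrightarrow>
     (\<exists>(N::nat) (U::nat \<Rightarrow> (nat \<Rightarrow> real) set).
        real N \<le> exp (C * p) \<and>
        KB n p = (\<Union>i\<in>{1..N}. U i) \<and>
        (\<forall>i\<in>{1..N}.
           (SUP x\<in>U i. SUP x'\<in>U i. beta n m a T (\<lambda>j. x j - x' j))
             \<le> ennreal (1 / sqrt p) * gauss_exp_sup n m a T \<and>
           ennreal (1 / sqrt p) * gauss_exp_sup n m a T \<le> ennreal (1 / sqrt p) * sA n m a T))"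
  apply (rule exI[of _ 1041])
  apply (intro allI impI)
  apply (elim conjE)
  apply (rule main_inst)
   apply assumption+
  done

end
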